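(* Let $\alpha\in(0,1)$, $\theta=\alpha/2$, and let $0=t_0<\cdots<t_N=T$ be a time mesh with $\tau_k=t_k-t_{k-1}$ and $r_k=\tau_k/\tau_{k-1}$. Define $\beta_k:=\frac{2(1-\alpha/2)r_k}{1+\alpha+(1-\alpha/2)r_k}$ for $k\ge2$. Then, for $n\ge2$: (i) $I^{(n)}_{n-k}>(1+\beta_{k+1})\zeta^{(n)}_{n-k}$ for $1\le k\le n-1$, and $I^{(n)}_{n-k}-(1+\beta_{k+1})\zeta^{(n)}_{n-k}<I^{(n-1)}_{n-k-1}-(1+\beta_{k+1})\zeta^{(n-1)}_{n-k-1}$ for $1\le k\le n-2$; (ii) $J^{(n)}_{n-k}>3\zeta^{(n)}_{n-k}$ for $1\le k\le n-1$, and $J^{(n)}_{n-k}-3\zeta^{(n)}_{n-k}<J^{(n-1)}_{n-k-1}-3\zeta^{(n-1)}_{n-k-1}$ for $1\le k\le n-2$; (iii) $r_n\zeta^{(n)}_1<\frac{\alpha}{3(2-\alpha)}\varpi_n'(t_{n-1})$.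
   Context: $\omega_\beta(t)=t^{\beta-1}/\Gamma(\beta)$; $t_{n-\theta}=\theta t_{n-1}+(1-\theta)t_n$; $\varpi_n'(t):=\omega_{1-\alpha}(t_{n-\theta}-t)$ and $\varpi_n''(t):=\frac{d}{dt}\varpi_n'(t)$ for $0\le t<t_{n-\theta}$. For $1\le k\le n$: $\zeta^{(n)}_{n-k}:=\frac{2}{\tau_k^2}\int_{t_{k-1}}^{t_k}\big(s-\frac{t_{k-1}+t_k}{2}\big)\varpi_n'(s)\,ds$. For $1\le k\le n-1$: $$I^{(n)}_{n-k}:=\int_{t_{k-1}}^{t_k}\frac{t_k-t}{\tau_k}\varpi_n''(t)\,dt,\qquad J^{(n)}_{n-k}:=\int_{t_{k-1}}^{t_k}\frac{t-t_{k-1}}{\tau_k}\varpi_n''(t)\,dt.$$ *)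

theory Defs
  imports "HOL-Analysis.Analysis"
begin

definition omega :: "real \<Rightarrow> real \<Rightarrow> real" where
  "omega \<beta> s = s powr (\<beta> - 1) / Gamma \<beta>"

definition tau :: "(nat \<Rightarrow> real) \<Rightarrow> nat \<Rightarrow> real" where
  "tau t k = t k - t (k - 1)"

definition ratio :: "(nat \<Rightarrow> real) \<Rightarrow> nat \<Rightarrow> real" where
  "ratio t k = tau t k / tau t (k - 1)"

definition tshift :: "(nat \<Rightarrow> real) \<Rightarrow> real \<Rightarrow> nat \<Rightarrow> real" where
  "tshift t \<theta> n = \<theta> * t (n - 1) + (1 - \<theta>) * t n"

definition varpi1 :: "(nat \<Rightarrow> real) \<Rightarrow> real \<Rightarrow> nat \<Rightarrow> real \<Rightarrow> real" where
  "varpi1 t \<alpha> n s = omega (1 - \<alpha>) (tshift t (\<alpha>/2) n - s)"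

definition varpi2 :: "(nat \<Rightarrow> real) \<Rightarrow> real \<Rightarrow> nat \<Rightarrow> real \<Rightarrow> real" where
  "varpi2 t \<alpha> n s = deriv (varpi1 t \<alpha> n) s"

(* zeta^{(n)}_{n-k} *)
definition zeta :: "(nat \<Rightarrow> real) \<Rightarrow> real \<Rightarrow> nat \<Rightarrow> nat \<Rightarrow> real" where
  "zeta t \<alpha> n k = 2 / (tau t k)^2 *
     integral {t (k - 1)..t k} (\<lambda>s. (s - (t (k - 1) + t k) / 2) * varpi1 t \<alpha> n s)"

(* I^{(n)}_{n-k} *)
definition Iint :: "(nat \<Rightarrow> real) \<Rightarrow> real \<Rightarrow> nat \<Rightarrow> nat \<Rightarrow> real" where
  "Iint t \<alpha> n k = integral {t (k - 1)..t k} (\<lambda>s. (t k - s) / tau t k * varpi2 t \<alpha> n s)"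

(* J^{(n)}_{n-k} *)
definition Jint :: "(nat \<Rightarrow> real) \<Rightarrow> real \<Rightarrow> nat \<Rightarrow> nat \<Rightarrow> real" where
  "Jint t \<alpha> n k = integral {t (k - 1)..t k} (\<lambda>s. (s - t (k - 1)) / tau t k * varpi2 t \<alpha> n s)"

definition betak :: "(nat \<Rightarrow> real) \<Rightarrow> real \<Rightarrow> nat \<Rightarrow> real" where
  "betak t \<alpha> k = 2 * (1 - \<alpha>/2) * ratio t k / (1 + \<alpha> + (1 - \<alpha>/2) * ratio t k)"

end

theory Submission
  imports Defs
begin


lemma ftc_real:
  fixes F f :: "real \<Rightarrow> real"
  assumes "a \<le> b" "\<And>x. x \<in> {a..b} \<Longrightarrow> (F has_real_derivative f x) (at x)"
  shows "(f has_integral (F b - F a)) {a..b}"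
  by (rule fundamental_theorem_of_calculus[OF assms(1)])
     (meson assms(2) has_real_derivative_iff_has_vector_derivative has_vector_derivative_at_within)

lemma ln_upper:
  fixes y :: real assumes "1 < y"
  shows "ln y < (y - 1) * (5 + y) / (2 + 4 * y)"
proof -
  let ?f = "\<lambda>y. (y - 1) * (5 + y) / (2 + 4 * y) - ln y"
  have "?f 1 < ?f y"
  proof (rule DERIV_pos_imp_increasing_open[OF assms])
    fix x :: real assume x: "1 < x" "x < y"
    have nz: "x \<noteq> 0" "2 + 4 * x \<noteq> 0" using x by auto
    have d0: "(?f has_real_derivative ((1 * (5 + x) + (x - 1) * 1) * (2 + 4 * x) - (x - 1) * (5 + x) * 4) / (2 + 4 * x)^2 - 1 / x) (at x)"
      using x by (auto intro!: derivative_eq_intros simp: power2_eq_square)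
    have "((1 * (5 + x) + (x - 1) * 1) * (2 + 4 * x) - (x - 1) * (5 + x) * 4) / (2 + 4 * x)^2 - 1 / x
       = 4 * (x - 1)^3 / (x * (2 + 4*x)^2)"
      using nz by (simp add: field_simps) (simp add: algebra_simps power2_eq_square power3_eq_cube)
    with d0 have d: "(?f has_real_derivative 4 * (x - 1)^3 / (x * (2 + 4*x)^2)) (at x)" by simp
    moreover have "4 * (x - 1)^3 / (x * (2 + 4*x)^2) > 0" using x by (auto intro!: divide_pos_pos)
    ultimately show "\<exists>y. (?f has_real_derivative y) (at x) \<and> y > 0" by blast
  next
    show "continuous_on {1..y} ?f"
      by (intro continuous_intros) auto
  qed
  then show ?thesis by simp
qed

lemma ln_lower:
  fixes y :: real assumes "1 < y"
  shows "ln y > (y - 1) * (1 + 5 * y) / (2 * y * (2 + y))"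
proof -
  let ?f = "\<lambda>y. ln y - (y - 1) * (1 + 5 * y) / (2 * y * (2 + y))"
  have "?f 1 < ?f y"
  proof (rule DERIV_pos_imp_increasing_open[OF assms])
    fix x :: real assume x: "1 < x" "x < y"
    have nz: "x \<noteq> 0" "2 + x \<noteq> 0" "2 * x * (2 + x) \<noteq> 0" "4 + 2 * x \<noteq> 0" using x by auto
    have d0: "(?f has_real_derivative 1 / x - (((1 * (1 + 5 * x) + (x - 1) * 5) * (2 * x * (2 + x)) - (x - 1) * (1 + 5 * x) * (2 * (2 + x) + 2 * x)) / (2 * x * (2 + x))^2)) (at x)"
      using x by (auto intro!: derivative_eq_intros simp: power2_eq_square)
    have "1 / x - (((1 * (1 + 5 * x) + (x - 1) * 5) * (2 * x * (2 + x)) - (x - 1) * (1 + 5 * x) * (2 * (2 + x) + 2 * x)) / (2 * x * (2 + x))^2)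
       = 4 * (x - 1)^3 / (x^2 * (4 + 2*x)^2)"
      using nz by (simp add: field_simps) (simp add: algebra_simps power2_eq_square power3_eq_cube)
    with d0 have d: "(?f has_real_derivative 4 * (x - 1)^3 / (x^2 * (4 + 2*x)^2)) (at x)" by simp
    moreover have "4 * (x - 1)^3 / (x^2 * (4 + 2*x)^2) > 0" using x by (auto intro!: divide_pos_pos)
    ultimately show "\<exists>y. (?f has_real_derivative y) (at x) \<and> y > 0" by blast
  next
    show "continuous_on {1..y} ?f"
      by (intro continuous_intros) auto
  qed
  then show ?thesis by simp
qed



lemma ftc_refl:
  fixes F f :: "real \<Rightarrow> real"
  assumes "p \<le> q" "q < T" "\<And>x. x > 0 \<Longrightarrow> (F has_real_derivative f x) (at x)"
  shows "integral {p..q} (\<lambda>s. f (T - s)) = F (T - p) - F (T - q)"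
proof -
  have "((\<lambda>s. f (T - s)) has_integral ((\<lambda>s. - F (T - s)) q - (\<lambda>s. - F (T - s)) p)) {p..q}"
  proof (rule ftc_real[OF assms(1)])
    fix s assume s: "s \<in> {p..q}"
    have xs: "T - s > 0" using s assms by auto
    have "((\<lambda>s. F (T - s)) has_real_derivative f (T - s) * (-1)) (at s)"
      by (rule DERIV_chain2[where f=F and g="\<lambda>s. T - s", OF assms(3)[OF xs]])
         (auto intro!: derivative_eq_intros)
    from DERIV_minus[OF this] show "((\<lambda>s. - F (T - s)) has_real_derivative f (T - s)) (at s)" by simp
  qed
  then show ?thesis by (simp add: integral_unique)
qed

lemma closedA:
  fixes p q T :: real
  assumes pq: "p < q" and qT: "q < T"
  shows "integral {p..q} (\<lambda>s. (q - s) * (((q-p) + 3*(T-q)) * (q - s) - 2*(T-q)*(q-p)) / (T - s)^2) > 0"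
proof -
  define a where "a = T - q"
  define b where "b = T - p"
  define \<tau> where "\<tau> = q - p"
  define A where "A = \<tau> + 3*a"
  have a0: "a > 0" and ab: "a < b" and tb: "\<tau> = b - a" using assms by (auto simp: a_def b_def \<tau>_def)
  define F where "F = (\<lambda>x. A * x - 2*a*(A+\<tau>) * ln x - a^2*(A+2*\<tau>) / x)"
  define f where "f = (\<lambda>x::real. (x - a) * (A * (x - a) - 2*a*\<tau>) / x^2)"
  have der: "(F has_real_derivative f x) (at x)" if x: "x > 0" for x
  proof -
    have "(F has_real_derivative A - 2*a*(A+\<tau>) / x + a^2*(A+2*\<tau>) / x^2) (at x)"
      unfolding F_def using x
      apply (auto intro!: derivative_eq_intros simp: field_simps)
      apply (simp add: eval_nat_numeral algebra_simps)
      done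
    moreover have "A - 2*a*(A+\<tau>) / x + a^2*(A+2*\<tau>) / x^2 = f x"
      using x unfolding f_def by (simp add: field_simps) (simp add: algebra_simps eval_nat_numeral)
    ultimately show ?thesis by simp
  qed
  have "integral {p..q} (\<lambda>s. (q - s) * (((q-p) + 3*(T-q)) * (q - s) - 2*(T-q)*(q-p)) / (T - s)^2)
      = integral {p..q} (\<lambda>s. f (T - s))"
    by (rule integral_cong) (simp add: f_def A_def a_def \<tau>_def algebra_simps)
  also have "\<dots> = F b - F a"
    using ftc_refl[OF less_imp_le[OF pq] qT der] by (simp add: a_def b_def)
  also have "\<dots> = A * \<tau> - 2*a*(A+\<tau>) * ln (b / a) + a*(A+2*\<tau>)*\<tau>/b"
    using a0 ab unfolding F_def tb
    by (simp add: ln_div field_simps power2_eq_square)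
  finally have int: "integral {p..q} (\<lambda>s. (q - s) * (((q-p) + 3*(T-q)) * (q - s) - 2*(T-q)*(q-p)) / (T - s)^2)
       = A * \<tau> - 2*a*(A+\<tau>) * ln (b / a) + a*(A+2*\<tau>)*\<tau>/b" .
  have nz: "a \<noteq> 0" "2*a+4*b \<noteq> 0" "b \<noteq> 0" "a*(2*a+4*b) \<noteq> 0" using a0 ab by auto
  have "(b/a - 1) * (5 + b/a) / (2 + 4 * (b/a)) = (b-a)*(5*a+b)/(a*(2*a+4*b))"
    using a0 ab by (simp add: divide_simps)
  then have L: "ln (b/a) < (b-a)*(5*a+b)/(a*(2*a+4*b))"
    using ln_upper[of "b/a"] a0 ab by simp
  have P: "A * \<tau> + a*(A+2*\<tau>)*\<tau>/b = 2*a*(A+\<tau>) * ((b-a)*(5*a+b)/(a*(2*a+4*b)))"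
    using a0 ab unfolding A_def tb by (simp add: divide_simps) (simp add: algebra_simps)
  have "2*a*(A+\<tau>) > 0" using a0 ab unfolding A_def tb by simp
  then have "2*a*(A+\<tau>) * ln (b/a) < 2*a*(A+\<tau>) * ((b-a)*(5*a+b)/(a*(2*a+4*b)))"
    by (rule mult_strict_left_mono[OF L])
  then show ?thesis unfolding int using P by linarith
qed


lemma closedB:
  fixes p q T :: real
  assumes pq: "p < q" and qT: "q < T"
  shows "integral {p..q} (\<lambda>s. (q - s) * (((q-p) + 3*(T-q)) * (q - s) - 2*(T-q)*(q-p)) / (T - s)^3) > 0"
proof -
  define a where "a = T - q"
  define b where "b = T - p"
  define \<tau> where "\<tau> = q - p"
  define A where "A = \<tau> + 3*a"
  have a0: "a > 0" and ab: "a < b" and tb: "\<tau> = b - a" using assms by (auto simp: a_def b_def \<tau>_def)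
  define F where "F = (\<lambda>x. A * ln x + 2*a*(A+\<tau>) / x - a^2*(A+2*\<tau>) / (2*x^2))"
  define f where "f = (\<lambda>x::real. (x - a) * (A * (x - a) - 2*a*\<tau>) / x^3)"
  have der: "(F has_real_derivative f x) (at x)" if x: "x > 0" for x
  proof -
    have "(F has_real_derivative A / x - 2*a*(A+\<tau>) / x^2 + a^2*(A+2*\<tau>) / x^3) (at x)"
      unfolding F_def using x
      apply (auto intro!: derivative_eq_intros)
      apply (simp add: divide_simps)
      apply (simp add: eval_nat_numeral algebra_simps)
      done
    moreover have "A / x - 2*a*(A+\<tau>) / x^2 + a^2*(A+2*\<tau>) / x^3 = f x"
      using x unfolding f_def by (simp add: divide_simps) (simp add: algebra_simps eval_nat_numeral)
    ultimately show ?thesis by simp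
  qed
  have "integral {p..q} (\<lambda>s. (q - s) * (((q-p) + 3*(T-q)) * (q - s) - 2*(T-q)*(q-p)) / (T - s)^3)
      = integral {p..q} (\<lambda>s. f (T - s))"
    by (rule integral_cong) (simp add: f_def A_def a_def \<tau>_def algebra_simps)
  also have "\<dots> = F b - F a"
    using ftc_refl[OF less_imp_le[OF pq] qT der] by (simp add: a_def b_def)
  also have "\<dots> = A * (ln b - ln a) + (2*a*(A+\<tau>) * (1/b - 1/a) - a^2*(A+2*\<tau>)/2 * (1/b^2 - 1/a^2))"
    using a0 ab unfolding F_def
    by (simp add: divide_simps) (simp add: algebra_simps eval_nat_numeral)
  also have "\<dots> = A * ln (b / a) + (2*a*(A+\<tau>) * (1/b - 1/a) - a^2*(A+2*\<tau>)/2 * (1/b^2 - 1/a^2))"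
    using a0 ab by (simp add: ln_div)
  finally have int: "integral {p..q} (\<lambda>s. (q - s) * (((q-p) + 3*(T-q)) * (q - s) - 2*(T-q)*(q-p)) / (T - s)^3)
       = A * ln (b / a) + (2*a*(A+\<tau>) * (1/b - 1/a) - a^2*(A+2*\<tau>)/2 * (1/b^2 - 1/a^2))" .
  have "(b/a - 1) * (1 + 5 * (b/a)) / (2 * (b/a) * (2 + b/a)) = (b-a)*(a+5*b)/(2*b*(2*a+b))"
    using a0 ab by (simp add: divide_simps)
  then have L: "ln (b/a) > (b-a)*(a+5*b)/(2*b*(2*a+b))"
    using ln_lower[of "b/a"] a0 ab by simp
  have P: "2*a*(A+\<tau>) * (1/b - 1/a) - a^2*(A+2*\<tau>)/2 * (1/b^2 - 1/a^2) = - A * ((b-a)*(a+5*b)/(2*b*(2*a+b)))"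
    using a0 ab unfolding A_def tb by (simp add: divide_simps) (simp add: algebra_simps eval_nat_numeral)
  have "A > 0" using a0 ab unfolding A_def tb by simp
  then have "A * ln (b/a) > A * ((b-a)*(a+5*b)/(2*b*(2*a+b)))"
    by (rule mult_strict_left_mono[OF L])
  then show ?thesis unfolding int P by linarith
qed


lemma integral_mono_cont:
  fixes f g :: "real \<Rightarrow> real"
  assumes "continuous_on {p..q} f" "continuous_on {p..q} g" "\<And>s. s \<in> {p..q} \<Longrightarrow> f s \<le> g s"
  shows "integral {p..q} f \<le> integral {p..q} g"
  using assms by (intro integral_le integrable_continuous_interval) auto

lemma cont_powr_shift:
  fixes p q T e :: real
  assumes "q < T"
  shows "continuous_on {p..q} (\<lambda>s. (T - s) powr e)"
  using assms by (intro continuous_intros) auto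

lemma coreI:
  fixes p q T \<alpha> \<beta> \<gamma> :: real and m :: nat
  assumes pq: "p < q" and qT: "q < T" and al: "0 \<le> \<alpha>" and gm: "\<gamma> \<le> real m"
    and be: "\<beta> * ((1+\<alpha>)*(q-p) + (T-q)) \<le> 2*(T-q)"
    and cl: "integral {p..q} (\<lambda>s. (q - s) * (((q-p) + 3*(T-q)) * (q - s) - 2*(T-q)*(q-p)) / (T - s)^m) > 0"
  shows "integral {p..q} (\<lambda>s. (q - s) * ((q - p) - (1 + \<beta>) * (s - p)) * (T - s) powr (-\<gamma>)) > 0"
proof -
  define a where "a = T - q"
  define \<tau> where "\<tau> = q - p"
  define A' where "A' = (1+\<alpha>)*\<tau> + 3*a"
  define D where "D = (1+\<alpha>)*\<tau> + a"
  define X0 where "X0 = a + 2*a*\<tau>/A'"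
  have a0: "a > 0" and t0: "\<tau> > 0" using assms by (auto simp: a_def \<tau>_def)
  have A0: "A' > 0" and D0: "D > 0" using a0 t0 al by (auto simp: A'_def D_def intro!: add_nonneg_pos)
  have X0p: "X0 > 0" using a0 t0 A0 by (simp add: X0_def add_pos_nonneg)
  have AX: "A' * X0 = A' * a + 2*a*\<tau>" using A0 by (simp add: X0_def field_simps)
  define K where "K = (\<lambda>s. (q - s) * ((q - p) - (1 + \<beta>) * (s - p)))"
  define \<kappa> where "\<kappa> = (\<lambda>s. (q - s) * (A' * (q - s) - 2*a*\<tau>))"
  define \<kappa>0 where "\<kappa>0 = (\<lambda>s. (q - s) * (((q-p) + 3*(T-q)) * (q - s) - 2*(T-q)*(q-p)))"
  define C where "C = X0 powr (real m - \<gamma>)"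
  have C0: "C > 0" using X0p by (simp add: C_def)
  have pt: "C * (\<kappa>0 s / (T - s)^m) \<le> D * (K s * (T - s) powr (-\<gamma>))" if s: "s \<in> {p..q}" for s
  proof -
    define x where "x = T - s"
    have x0: "x > 0" and xa: "x \<ge> a" and qs: "q - s = x - a" using s qT by (auto simp: x_def a_def)
    have sp: "s - p \<ge> 0" using s by auto
    have step1: "D * K s \<ge> \<kappa> s"
    proof -
      have "\<beta> * D * (s - p) \<le> 2 * a * (s - p)"
        using mult_right_mono[OF be sp] by (simp add: D_def a_def \<tau>_def)
      then have "D * ((q - p) - (1 + \<beta>) * (s - p)) \<ge> A' * (q - s) - 2*a*\<tau>"
        by (simp add: D_def A'_def \<tau>_def algebra_simps)
      then show ?thesis unfolding K_def \<kappa>_def using s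
        by (metis (no_types, lifting) diff_ge_0_iff_ge mult.left_commute mult_left_mono atLeastAtMost_iff)
    qed
    have kap: "\<kappa> s = (x - a) * A' * (x - X0)"
    proof -
      have "A'*(x-a) - 2*a*\<tau> = A'*(x - X0)" using AX by (simp add: algebra_simps)
      then show ?thesis unfolding \<kappa>_def qs by simp
    qed
    have xm: "x powr (-\<gamma>) = x powr (real m - \<gamma>) * (1 / x^m)"
      using x0 by (simp add: powr_diff powr_realpow divide_simps powr_minus)
    have step2: "\<kappa> s * (x powr (real m - \<gamma>) - C) \<ge> 0"
    proof (cases "x \<le> X0")
      case True
      then have "x powr (real m - \<gamma>) \<le> C" unfolding C_def
        using gm x0 by (intro powr_mono2) auto
      moreover have "\<kappa> s \<le> 0" unfolding kap using xa True A0
        by (simp add: mult_nonneg_nonpos)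
      ultimately show ?thesis by (simp add: mult_nonpos_nonpos)
    next
      case False
      then have "x powr (real m - \<gamma>) \<ge> C" unfolding C_def
        using gm X0p by (intro powr_mono2) auto
      moreover have "\<kappa> s \<ge> 0" unfolding kap using xa False A0 by simp
      ultimately show ?thesis by simp
    qed
    have step3: "\<kappa>0 s \<le> \<kappa> s"
    proof -
      have "\<kappa> s - \<kappa>0 s = \<alpha> * \<tau> * (q - s)^2"
        unfolding \<kappa>_def \<kappa>0_def A'_def a_def \<tau>_def by (simp add: algebra_simps power2_eq_square)
      moreover have "\<alpha> * \<tau> * (q - s)^2 \<ge> 0" using al t0 by simp
      ultimately show ?thesis by linarith
    qed
    have im: "1 / x^m > 0" using x0 by simp
    have "C * (\<kappa>0 s / x^m) = C * \<kappa>0 s * (1 / x^m)" by simp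
    also have "\<dots> \<le> C * \<kappa> s * (1 / x^m)"
      using step3 C0 im by (intro mult_right_mono mult_left_mono) auto
    also have "\<dots> \<le> \<kappa> s * x powr (real m - \<gamma>) * (1 / x^m)"
      using step2 im by (intro mult_right_mono) (auto simp: algebra_simps)
    also have "\<dots> = \<kappa> s * x powr (-\<gamma>)" by (simp add: xm)
    also have "\<dots> \<le> D * K s * x powr (-\<gamma>)"
      using step1 by (intro mult_right_mono) auto
    finally show ?thesis by (simp add: x_def mult.assoc)
  qed
  have cK: "continuous_on {p..q} (\<lambda>s. K s * (T - s) powr (-\<gamma>))"
    unfolding K_def using qT by (intro continuous_intros) auto
  have "0 < C * integral {p..q} (\<lambda>s. \<kappa>0 s / (T - s)^m)"
    using C0 cl unfolding \<kappa>0_def by simp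
  also have "\<dots> = integral {p..q} (\<lambda>s. C * (\<kappa>0 s / (T - s)^m))" by (rule integral_mult_right[symmetric])
  also have "\<dots> \<le> integral {p..q} (\<lambda>s. D * (K s * (T - s) powr (-\<gamma>)))"
  proof (rule integral_mono_cont[OF _ _ pt])
    show "continuous_on {p..q} (\<lambda>s. C * (\<kappa>0 s / (T - s)^m))"
      unfolding \<kappa>0_def using qT by (intro continuous_intros) auto
    show "continuous_on {p..q} (\<lambda>s. D * (K s * (T - s) powr (-\<gamma>)))"
      unfolding K_def using qT by (intro continuous_intros) auto
  qed
  also have "\<dots> = D * integral {p..q} (\<lambda>s. K s * (T - s) powr (-\<gamma>))" by (rule integral_mult_right)
  finally have "0 < D * integral {p..q} (\<lambda>s. K s * (T - s) powr (-\<gamma>))" .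
  then have "integral {p..q} (\<lambda>s. K s * (T - s) powr (-\<gamma>)) > 0"
    using D0 by (simp add: zero_less_mult_iff)
  then show ?thesis unfolding K_def .
qed



lemma pos_integral:
  fixes f :: "real \<Rightarrow> real"
  assumes "continuous_on {p..q} f" "p < q" "\<And>s. s \<in> {p..q} \<Longrightarrow> f s \<ge> 0" "c \<in> {p..q}" "f c > 0"
  shows "integral {p..q} f > 0"
proof -
  have "integral {p..q} f \<ge> 0"
    using assms by (intro integral_nonneg integrable_continuous_interval) auto
  moreover have "integral {p..q} f \<noteq> 0"
    using integral_eq_0_iff[OF assms(1,2)] assms(3-5) by auto
  ultimately show ?thesis by simp
qed

lemma poly_int0:
  fixes p q :: real assumes "p \<le> q"
  shows "integral {p..q} (\<lambda>s. (s - p) * ((q - p) - 3*(q - s))) = 0"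
proof -
  have "((\<lambda>s. (s - p) * ((q - p) - 3*(q - s))) has_integral
        ((\<lambda>s. (s-p)^3 - (q-p)*(s-p)^2) q - (\<lambda>s. (s-p)^3 - (q-p)*(s-p)^2) p)) {p..q}"
    by (rule ftc_real[OF assms])
       (auto intro!: derivative_eq_intros simp: algebra_simps power2_eq_square)
  then show ?thesis by (simp add: integral_unique power2_eq_square power3_eq_cube)
qed

lemma poly_int6:
  fixes p q :: real assumes "p \<le> q"
  shows "integral {p..q} (\<lambda>s. (s - p) * (q - s)) = (q - p)^3 / 6"
proof -
  have "((\<lambda>s. (s - p) * (q - s)) has_integral
        ((\<lambda>s. (q-p)*((s-p)*(s-p))/2 - (s-p)*(s-p)*(s-p)/3) q - (\<lambda>s. (q-p)*((s-p)*(s-p))/2 - (s-p)*(s-p)*(s-p)/3) p)) {p..q}"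
    by (rule ftc_real[OF assms])
       (auto intro!: derivative_eq_intros simp: field_simps)
  then show ?thesis by (simp add: integral_unique power3_eq_cube)
qed

lemma coreJ:
  fixes p q T \<gamma> :: real
  assumes pq: "p < q" and qT: "q < T" and g0: "\<gamma> > 0"
  shows "integral {p..q} (\<lambda>s. (s - p) * ((q - p) - 3*(q - s)) * (T - s) powr (-\<gamma>)) > 0"
proof -
  define s0 where "s0 = q - (q - p)/3"
  define W0 where "W0 = (T - s0) powr (-\<gamma>)"
  define K where "K = (\<lambda>s. (s - p) * ((q - p) - 3*(q - s)))"
  have s0T: "s0 < T" "s0 < q" using pq qT by (simp_all add: s0_def field_simps)
  have cK: "continuous_on {p..q} K" unfolding K_def by (intro continuous_intros)
  have cW: "continuous_on {p..q} (\<lambda>s. (T - s) powr (-\<gamma>))"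
    using qT by (intro continuous_intros) auto
  have nn: "K s * ((T - s) powr (-\<gamma>) - W0) \<ge> 0" if s: "s \<in> {p..q}" for s
  proof (cases "s \<le> s0")
    case True
    have "(q - p) - 3*(q - s) \<le> 0" using True by (simp add: s0_def field_simps)
    then have "K s \<le> 0" unfolding K_def using s by (intro mult_nonneg_nonpos) auto
    moreover have "(T - s) powr (-\<gamma>) \<le> W0" unfolding W0_def
      using True s qT g0 s0T by (intro powr_mono2') auto
    ultimately show ?thesis by (simp add: mult_nonpos_nonpos)
  next
    case False
    have "(q - p) - 3*(q - s) \<ge> 0" using False by (simp add: s0_def field_simps)
    then have "K s \<ge> 0" unfolding K_def using s by (intro mult_nonneg_nonneg) auto
    moreover have "(T - s) powr (-\<gamma>) \<ge> W0" unfolding W0_def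
      using False s qT g0 s0T by (intro powr_mono2') auto
    ultimately show ?thesis by simp
  qed
  have pq': "K q * ((T - q) powr (-\<gamma>) - W0) > 0"
  proof -
    have "K q > 0" unfolding K_def using pq by simp
    moreover have "(T - q) powr (-\<gamma>) > W0" unfolding W0_def
      using pq qT g0 s0T by (intro powr_less_mono2_neg) auto
    ultimately show ?thesis by simp
  qed
  have c1: "continuous_on {p..q} (\<lambda>s. K s * ((T - s) powr (-\<gamma>) - W0))"
    by (intro continuous_intros cK cW)
  have pos: "integral {p..q} (\<lambda>s. K s * ((T - s) powr (-\<gamma>) - W0)) > 0"
    by (rule pos_integral[OF c1 pq nn _ pq']) (use pq in auto)
  have "integral {p..q} (\<lambda>s. K s * (T - s) powr (-\<gamma>))
      = integral {p..q} (\<lambda>s. K s * ((T - s) powr (-\<gamma>) - W0) + W0 * K s)"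
    by (rule integral_cong) (simp add: algebra_simps)
  also have "\<dots> = integral {p..q} (\<lambda>s. K s * ((T - s) powr (-\<gamma>) - W0)) + integral {p..q} (\<lambda>s. W0 * K s)"
    by (rule Henstock_Kurzweil_Integration.integral_add; intro integrable_continuous_interval continuous_intros cK c1)
  also have "integral {p..q} (\<lambda>s. W0 * K s) = 0"
    using poly_int0[of p q] pq unfolding K_def by simp
  finally show ?thesis using pos unfolding K_def by simp
qed



lemma lin2:
  fixes f g :: "real \<Rightarrow> real"
  assumes "continuous_on {p..q} f" "continuous_on {p..q} g"
  shows "integral {p..q} (\<lambda>s. c1 * f s + c2 * g s) = c1 * integral {p..q} f + c2 * integral {p..q} g"
proof -
  have "integral {p..q} (\<lambda>s. c1 * f s + c2 * g s) = integral {p..q} (\<lambda>s. c1 * f s) + integral {p..q} (\<lambda>s. c2 * g s)"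
    using assms by (intro Henstock_Kurzweil_Integration.integral_add integrable_continuous_interval continuous_intros)
  then show ?thesis by simp
qed

lemma varpi1_eq:
  "varpi1 t \<alpha> n s = (tshift t (\<alpha>/2) n - s) powr (-\<alpha>) / Gamma (1 - \<alpha>)"
  by (simp add: varpi1_def omega_def)

lemma Gnz: 
  fixes \<alpha> :: real assumes "\<alpha> < 1" shows "Gamma (1 - \<alpha>) \<noteq> 0"
proof -
  have "1 - \<alpha> > 0" using assms by simp
  from Gamma_real_pos[OF this] show ?thesis by simp
qed

lemma varpi1_deriv:
  assumes "s < tshift t (\<alpha>/2) n" "\<alpha> < 1"
  shows "(varpi1 t \<alpha> n has_real_derivative \<alpha> * (tshift t (\<alpha>/2) n - s) powr (-\<alpha>-1) / Gamma (1 - \<alpha>)) (at s)"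
proof -
  have "((\<lambda>s. (tshift t (\<alpha>/2) n - s) powr (-\<alpha>) / Gamma (1 - \<alpha>)) has_real_derivative
        (-\<alpha>) * (tshift t (\<alpha>/2) n - s) powr (-\<alpha> - 1) * (-1) / Gamma (1 - \<alpha>)) (at s)"
    using assms Gnz[OF assms(2)] by (auto intro!: derivative_eq_intros)
  then show ?thesis unfolding varpi1_eq[abs_def] by simp
qed

lemma varpi2_eq:
  assumes "s < tshift t (\<alpha>/2) n" "\<alpha> < 1"
  shows "varpi2 t \<alpha> n s = \<alpha> * (tshift t (\<alpha>/2) n - s) powr (-\<alpha>-1) / Gamma (1 - \<alpha>)"
  unfolding varpi2_def using DERIV_imp_deriv[OF varpi1_deriv[OF assms(1,2)]] .

lemma Iint_rep:
  assumes pq: "t (k-1) < t k" and qT: "t k < tshift t (\<alpha>/2) n" and al: "\<alpha> < 1"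
  shows "Iint t \<alpha> n k = \<alpha> / Gamma (1-\<alpha>) / tau t k *
     integral {t (k-1)..t k} (\<lambda>s. (t k - s) * (tshift t (\<alpha>/2) n - s) powr (-\<alpha>-1))"
proof -
  have "Iint t \<alpha> n k = integral {t (k-1)..t k} (\<lambda>s. \<alpha> / Gamma (1-\<alpha>) / tau t k *
     ((t k - s) * (tshift t (\<alpha>/2) n - s) powr (-\<alpha>-1)))"
    unfolding Iint_def
    by (rule integral_cong) (use qT al in \<open>auto simp: varpi2_eq mult_ac\<close>)
  then show ?thesis by simp
qed

lemma Jint_rep:
  assumes pq: "t (k-1) < t k" and qT: "t k < tshift t (\<alpha>/2) n" and al: "\<alpha> < 1"
  shows "Jint t \<alpha> n k = \<alpha> / Gamma (1-\<alpha>) / tau t k *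
     integral {t (k-1)..t k} (\<lambda>s. (s - t (k-1)) * (tshift t (\<alpha>/2) n - s) powr (-\<alpha>-1))"
proof -
  have "Jint t \<alpha> n k = integral {t (k-1)..t k} (\<lambda>s. \<alpha> / Gamma (1-\<alpha>) / tau t k *
     ((s - t (k-1)) * (tshift t (\<alpha>/2) n - s) powr (-\<alpha>-1)))"
    unfolding Jint_def
    by (rule integral_cong) (use qT al in \<open>auto simp: varpi2_eq mult_ac\<close>)
  then show ?thesis by simp
qed

lemma zeta_rep:
  assumes pq: "t (k-1) < t k" and qT: "t k < tshift t (\<alpha>/2) n" and al: "\<alpha> < 1"
  shows "zeta t \<alpha> n k = \<alpha> / Gamma (1-\<alpha>) / (tau t k)^2 *
     integral {t (k-1)..t k} (\<lambda>s. (s - t (k-1)) * (t k - s) * (tshift t (\<alpha>/2) n - s) powr (-\<alpha>-1))"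
proof -
  define p where "p = t (k-1)"
  define q where "q = t k"
  define T where "T = tshift t (\<alpha>/2) n"
  define w where "w = varpi1 t \<alpha> n"
  define w' where "w' = (\<lambda>s. \<alpha> * (T - s) powr (-\<alpha>-1) / Gamma (1 - \<alpha>))"
  have pq': "p < q" and qT': "q < T" using assms by (auto simp: p_def q_def T_def)
  have wd: "(w has_real_derivative w' s) (at s)" if "s \<in> {p..q}" for s
    unfolding w_def w'_def T_def by (rule varpi1_deriv) (use that qT' al in \<open>auto simp: T_def\<close>)
  have cw: "continuous_on {p..q} w"
    unfolding w_def varpi1_eq[abs_def] using qT' Gnz[OF al] by (intro continuous_intros) (auto simp: T_def)
  have cw': "continuous_on {p..q} w'"
    unfolding w'_def using qT' Gnz[OF al] by (intro continuous_intros) auto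
  define H where "H = (\<lambda>s. (s - p) * (q - s) * w s)"
  have "((\<lambda>s. (-2) * ((s - (p + q)/2) * w s) + 1 * ((s - p) * (q - s) * w' s)) has_integral (H q - H p)) {p..q}"
    by (rule ftc_real) (use pq' in \<open>auto simp: H_def intro!: derivative_eq_intros wd simp: field_simps\<close>)
  then have "integral {p..q} (\<lambda>s. (-2) * ((s - (p + q)/2) * w s) + 1 * ((s - p) * (q - s) * w' s)) = 0"
    by (simp add: H_def integral_unique)
  then have "(-2) * integral {p..q} (\<lambda>s. (s - (p + q)/2) * w s) + 1 * integral {p..q} (\<lambda>s. (s - p) * (q - s) * w' s) = 0"
    by (subst (asm) lin2) (auto intro!: continuous_intros cw cw')
  then have e: "integral {p..q} (\<lambda>s. (s - (p + q)/2) * w s) = integral {p..q} (\<lambda>s. (s - p) * (q - s) * w' s) / 2"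
    by simp
  have "integral {p..q} (\<lambda>s. (s - p) * (q - s) * w' s) =
     integral {p..q} (\<lambda>s. \<alpha> / Gamma (1-\<alpha>) * ((s - p) * (q - s) * (T - s) powr (-\<alpha>-1)))"
    unfolding w'_def by (rule integral_cong) simp
  then show ?thesis
    unfolding zeta_def using e by (simp add: p_def q_def T_def w_def tau_def)
qed



lemma mono_T:
  fixes K :: "real \<Rightarrow> real" and p q T1 T2 \<gamma> :: real
  assumes pq: "p < q" and qT: "q < T2" and T21: "T2 < T1" and cK: "continuous_on {p..q} K"
    and g0: "\<gamma> > 0"
    and pos: "\<And>T. T \<in> {T2..T1} \<Longrightarrow> integral {p..q} (\<lambda>s. K s * (T - s) powr (-\<gamma>-1)) > 0"
  shows "integral {p..q} (\<lambda>s. K s * (T1 - s) powr (-\<gamma>)) < integral {p..q} (\<lambda>s. K s * (T2 - s) powr (-\<gamma>))"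
proof -
  define F where "F = (\<lambda>T. integral {p..q} (\<lambda>s. K s * (T - s) powr (-\<gamma>)))"
  define U where "U = {q<..}"
  have cKs: "continuous_on (U \<times> {p..q}) (\<lambda>z. K (snd z))"
    by (rule continuous_on_compose2[OF cK]) (auto intro: continuous_intros)
  have der: "(F has_field_derivative integral {p..q} (\<lambda>s. K s * (-\<gamma> * (T - s) powr (-\<gamma>-1)))) (at T)"
    if T: "T \<in> U" for T
  proof -
    have "(F has_field_derivative integral (cbox p q) (\<lambda>s. K s * (-\<gamma> * (T - s) powr (-\<gamma>-1)))) (at T within U)"
      unfolding F_def box_real(2)[symmetric]
    proof (rule leibniz_rule_field_derivative[where fx="\<lambda>x s. K s * (-\<gamma> * (x - s) powr (-\<gamma>-1))"])
      fix x s assume x: "x \<in> U" and s: "s \<in> cbox p q"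
      have "x - s > 0" using x s by (auto simp: U_def)
      then show "((\<lambda>x. K s * (x - s) powr (-\<gamma>)) has_field_derivative K s * (-\<gamma> * (x - s) powr (-\<gamma>-1))) (at x within U)"
        by (auto intro!: derivative_eq_intros)
    next
      fix x assume x: "x \<in> U"
      show "(\<lambda>s. K s * (x - s) powr (-\<gamma>)) integrable_on cbox p q"
        unfolding box_real(2) using x
        by (intro integrable_continuous_interval continuous_intros cK) (auto simp: U_def)
    next
      have "continuous_on (U \<times> {p..q}) (\<lambda>z. K (snd z) * (-\<gamma> * (fst z - snd z) powr (-\<gamma>-1)))"
        by (intro continuous_intros cKs) (auto simp: U_def)
      then show "continuous_on (U \<times> cbox p q) (\<lambda>(x, s). K s * (-\<gamma> * (x - s) powr (-\<gamma>-1)))"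
        by (simp add: split_beta box_real(2))
    qed (use T in \<open>auto simp: U_def\<close>)
    moreover have "at T within U = at T" using T by (intro at_within_open) (auto simp: U_def)
    ultimately show ?thesis by (simp add: box_real(2))
  qed
  have "F T2 > F T1"
  proof (rule DERIV_neg_imp_decreasing[OF T21])
    fix T assume T: "T2 \<le> T" "T \<le> T1"
    have TU: "T \<in> U" using T qT by (auto simp: U_def)
    have "integral {p..q} (\<lambda>s. K s * (-\<gamma> * (T - s) powr (-\<gamma>-1))) =
          -\<gamma> * integral {p..q} (\<lambda>s. K s * (T - s) powr (-\<gamma>-1))"
      by (subst integral_mult_right[symmetric]) (rule integral_cong, simp)
    moreover have "-\<gamma> * integral {p..q} (\<lambda>s. K s * (T - s) powr (-\<gamma>-1)) < 0"
      using pos[of T] T g0 by (simp add: mult_pos_pos)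
    ultimately show "\<exists>y. (F has_real_derivative y) (at T) \<and> y < 0"
      using der[OF TU] by auto
  qed
  then show ?thesis unfolding F_def .
qed



lemma diff_rep:
  assumes pq: "t (k-1) < t k" and qT: "t k < tshift t (\<alpha>/2) m" and al: "\<alpha> < 1"
  shows "Iint t \<alpha> m k - (1 + \<beta>) * zeta t \<alpha> m k = \<alpha> / Gamma (1-\<alpha>) / (tau t k)^2 *
     integral {t (k-1)..t k} (\<lambda>s. (t k - s) * ((t k - t (k-1)) - (1 + \<beta>) * (s - t (k-1))) * (tshift t (\<alpha>/2) m - s) powr (-\<alpha>-1))"
    and "Jint t \<alpha> m k - 3 * zeta t \<alpha> m k = \<alpha> / Gamma (1-\<alpha>) / (tau t k)^2 *
     integral {t (k-1)..t k} (\<lambda>s. (s - t (k-1)) * ((t k - t (k-1)) - 3 * (t k - s)) * (tshift t (\<alpha>/2) m - s) powr (-\<alpha>-1))"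
proof -
  define p where "p = t (k-1)"
  define q where "q = t k"
  define T where "T = tshift t (\<alpha>/2) m"
  define c where "c = \<alpha> / Gamma (1-\<alpha>)"
  have tk: "tau t k = q - p" by (simp add: tau_def p_def q_def)
  have t0: "q - p > 0" using pq by (simp add: p_def q_def)
  have cW: "continuous_on {p..q} (\<lambda>s. (T - s) powr (-\<alpha>-1))"
    using qT by (intro continuous_intros) (auto simp: q_def T_def)
  have cX: "continuous_on {p..q} (\<lambda>s. (q - s) * (T - s) powr (-\<alpha>-1))"
    and cX': "continuous_on {p..q} (\<lambda>s. (s - p) * (T - s) powr (-\<alpha>-1))"
    and cY: "continuous_on {p..q} (\<lambda>s. (s - p) * (q - s) * (T - s) powr (-\<alpha>-1))"
    by (intro continuous_intros cW)+
  define X where "X = integral {p..q} (\<lambda>s. (q - s) * (T - s) powr (-\<alpha>-1))"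
  define X' where "X' = integral {p..q} (\<lambda>s. (s - p) * (T - s) powr (-\<alpha>-1))"
  define Y where "Y = integral {p..q} (\<lambda>s. (s - p) * (q - s) * (T - s) powr (-\<alpha>-1))"
  have I: "Iint t \<alpha> m k = c / (q - p) * X"
    using Iint_rep[OF pq qT al] by (simp add: X_def c_def p_def q_def T_def tk)
  have J: "Jint t \<alpha> m k = c / (q - p) * X'"
    using Jint_rep[OF pq qT al] by (simp add: X'_def c_def p_def q_def T_def tk)
  have Z: "zeta t \<alpha> m k = c / (q - p)^2 * Y"
    using zeta_rep[OF pq qT al] by (simp add: Y_def c_def p_def q_def T_def tk)
  have e1: "integral {p..q} (\<lambda>s. (q - s) * ((q - p) - (1 + \<beta>) * (s - p)) * (T - s) powr (-\<alpha>-1))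
     = (q - p) * X + (-(1+\<beta>)) * Y"
    unfolding X_def Y_def
    by (subst lin2[OF cX cY, symmetric]) (rule integral_cong, simp add: algebra_simps)
  have e2: "integral {p..q} (\<lambda>s. (s - p) * ((q - p) - 3 * (q - s)) * (T - s) powr (-\<alpha>-1))
     = (q - p) * X' + (-3) * Y"
    unfolding X'_def Y_def
    by (subst lin2[OF cX' cY, symmetric]) (rule integral_cong, simp add: algebra_simps)
  show "Iint t \<alpha> m k - (1 + \<beta>) * zeta t \<alpha> m k = \<alpha> / Gamma (1-\<alpha>) / (tau t k)^2 *
     integral {t (k-1)..t k} (\<lambda>s. (t k - s) * ((t k - t (k-1)) - (1 + \<beta>) * (s - t (k-1))) * (tshift t (\<alpha>/2) m - s) powr (-\<alpha>-1))"
    unfolding I Z tk c_def[symmetric] p_def[symmetric] q_def[symmetric] T_def[symmetric] unfolding e1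
    using t0 by (simp add: field_simps) (simp add: algebra_simps eval_nat_numeral)
  show "Jint t \<alpha> m k - 3 * zeta t \<alpha> m k = \<alpha> / Gamma (1-\<alpha>) / (tau t k)^2 *
     integral {t (k-1)..t k} (\<lambda>s. (s - t (k-1)) * ((t k - t (k-1)) - 3 * (t k - s)) * (tshift t (\<alpha>/2) m - s) powr (-\<alpha>-1))"
    unfolding J Z tk c_def[symmetric] p_def[symmetric] q_def[symmetric] T_def[symmetric] unfolding e2
    using t0 by (simp add: field_simps) (simp add: algebra_simps eval_nat_numeral)
qed

lemma beta_bound:
  fixes \<alpha> a :: real
  assumes al: "0 < \<alpha>" "\<alpha> < 1" and tk: "tau t k > 0" and tk1: "tau t (k+1) > 0"
    and a: "a \<ge> (1 - \<alpha>/2) * tau t (k+1)"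
  shows "betak t \<alpha> (k+1) * ((1+\<alpha>) * tau t k + a) \<le> 2 * a"
proof -
  define x where "x = (1 - \<alpha>/2) * (tau t (k+1) / tau t k)"
  have x0: "x \<ge> 0" using al tk tk1 by (simp add: x_def)
  have b: "betak t \<alpha> (k+1) = 2 * x / (1 + \<alpha> + x)"
    by (simp add: betak_def ratio_def x_def)
  have xt: "x * tau t k \<le> a" using a tk by (simp add: x_def)
  have d: "1 + \<alpha> + x > 0" using al x0 by simp
  have "2 * x * ((1+\<alpha>) * tau t k + a) \<le> 2 * a * (1 + \<alpha> + x)"
  proof -
    have "x * tau t k * (1 + \<alpha>) \<le> a * (1 + \<alpha>)" using xt al by (intro mult_right_mono) auto
    then show ?thesis by (simp add: algebra_simps)
  qed
  then show ?thesis unfolding b using d by (simp add: divide_simps)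
qed



lemma t_mono:
  assumes inc: "\<And>k. k < N \<Longrightarrow> t k < t (Suc k)" and ij: "i < j" and jN: "j \<le> N"
  shows "t i < (t j :: real)"
  using ij jN
proof (induction j)
  case 0 then show ?case by simp
next
  case (Suc j)
  show ?case
  proof (cases "i = j")
    case True then show ?thesis using inc Suc.prems by simp
  next
    case False
    then have "t i < t j" using Suc by simp
    also have "t j < t (Suc j)" using inc Suc.prems by simp
    finally show ?thesis .
  qed
qed

lemma t_mono_le:
  assumes inc: "\<And>k. k < N \<Longrightarrow> t k < t (Suc k)" and ij: "i \<le> j" and jN: "j \<le> N"
  shows "t i \<le> (t j :: real)"
  using t_mono[where t=t and N=N, OF inc, of i j] ij jN by (cases "i = j") auto

lemma tshift_props:
  fixes \<alpha> :: real
  assumes al: "0 < \<alpha>" "\<alpha> < 1" and lt: "t (m-1) < t m"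
  shows "t (m-1) < tshift t (\<alpha>/2) m" "tshift t (\<alpha>/2) m < t m"
    "tshift t (\<alpha>/2) m - t (m-1) = (1 - \<alpha>/2) * tau t m"
proof -
  have e: "tshift t (\<alpha>/2) m = t (m-1) + (1 - \<alpha>/2) * (t m - t (m-1))"
    by (simp add: tshift_def algebra_simps)
  have "(1 - \<alpha>/2) * (t m - t (m-1)) > 0" using al lt by simp
  then show "t (m-1) < tshift t (\<alpha>/2) m" using e by simp
  have "(1 - \<alpha>/2) * (t m - t (m-1)) < 1 * (t m - t (m-1))" using al lt by (intro mult_strict_right_mono) auto
  then show "tshift t (\<alpha>/2) m < t m" using e by simp
  show "tshift t (\<alpha>/2) m - t (m-1) = (1 - \<alpha>/2) * tau t m" using e by (simp add: tau_def)
qed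

lemma key_a:
  fixes \<alpha> T :: real
  assumes inc: "\<And>k. k < N \<Longrightarrow> t k < t (Suc k)" and al: "0 < \<alpha>" "\<alpha> < 1"
    and k: "k + 1 \<le> m" "m \<le> N" and T: "T \<ge> tshift t (\<alpha>/2) m"
  shows "T - t k \<ge> (1 - \<alpha>/2) * tau t (k+1)"
proof (cases "k + 1 = m")
  case True
  have lt: "t (m-1) < t m" using t_mono[where t=t and N=N, OF inc, of "m-1" m] k by simp
  have "tshift t (\<alpha>/2) m - t (m-1) = (1 - \<alpha>/2) * tau t m" using tshift_props[OF al lt] by simp
  moreover have "m - 1 = k" using True by simp
  ultimately show ?thesis using T True by simp
next
  case False
  have lt: "t (m-1) < t m" using t_mono[where t=t and N=N, OF inc, of "m-1" m] k by simp
  have "t (k+1) \<le> t (m-1)" using False k by (intro t_mono_le[where t=t and N=N, OF inc]) auto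
  also have "\<dots> < tshift t (\<alpha>/2) m" using tshift_props[OF al lt] by simp
  finally have "T - t k \<ge> tau t (k+1)" using T by (simp add: tau_def)
  moreover have "tau t (k+1) > 0" using t_mono[where t=t and N=N, OF inc, of k "k+1"] k by (simp add: tau_def)
  moreover have "(1 - \<alpha>/2) * tau t (k+1) \<le> 1 * tau t (k+1)"
    using al calculation(2) by (intro mult_right_mono) auto
  ultimately show ?thesis by linarith
qed



lemma part_i1:
  fixes \<alpha> :: real and t :: "nat \<Rightarrow> real"
  assumes al: "0 < \<alpha>" "\<alpha> < 1" and inc: "\<And>k. k < N \<Longrightarrow> t k < t (Suc k)"
    and n: "2 \<le> n" "n \<le> N" and k: "1 \<le> k" "k \<le> n - 1"
  shows "Iint t \<alpha> n k > (1 + betak t \<alpha> (k + 1)) * zeta t \<alpha> n k"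
proof -
  define T where "T = tshift t (\<alpha>/2) n"
  define p where "p = t (k-1)"
  define q where "q = t k"
  define \<beta> where "\<beta> = betak t \<alpha> (k + 1)"
  have pq: "p < q" unfolding p_def q_def using k n by (intro t_mono[where t=t and N=N, OF inc]) auto
  have ltn: "t (n-1) < t n" using n by (intro t_mono[where t=t and N=N, OF inc]) auto
  have "q \<le> t (n-1)" unfolding q_def using k n by (intro t_mono_le[where t=t and N=N, OF inc]) auto
  also have "t (n-1) < T" unfolding T_def using tshift_props[where m=n and t=t, OF al ltn] by simp
  finally have qT: "q < T" .
  have tk: "tau t k = q - p" by (simp add: tau_def p_def q_def)
  have tk1: "tau t (k+1) > 0" unfolding tau_def using k n by (simp add: t_mono[where t=t and N=N, OF inc])
  have a: "T - q \<ge> (1 - \<alpha>/2) * tau t (k+1)"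
    unfolding q_def T_def using k n by (intro key_a[where N=N and t=t, OF inc al]) auto
  have be: "\<beta> * ((1+\<alpha>)*(q-p) + (T-q)) \<le> 2*(T-q)"
    using beta_bound[OF al _ tk1 a] pq unfolding \<beta>_def tk by simp
  have pos: "integral {p..q} (\<lambda>s. (q - s) * ((q - p) - (1 + \<beta>) * (s - p)) * (T - s) powr (-(\<alpha>+1))) > 0"
    by (rule coreI[where m=2, OF pq qT _ _ be closedA[OF pq qT]]) (use al in auto)
  have c: "\<alpha> / Gamma (1-\<alpha>) / (tau t k)^2 > 0" using al pq tk by simp
  have "Iint t \<alpha> n k - (1 + \<beta>) * zeta t \<alpha> n k > 0"
    unfolding diff_rep(1)[OF pq[unfolded p_def q_def] qT[unfolded q_def T_def] al(2)]
    using mult_pos_pos[OF c pos] by (simp add: p_def q_def T_def)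
  then show ?thesis by (simp add: \<beta>_def)
qed

lemma part_i2:
  fixes \<alpha> :: real and t :: "nat \<Rightarrow> real"
  assumes al: "0 < \<alpha>" "\<alpha> < 1" and inc: "\<And>k. k < N \<Longrightarrow> t k < t (Suc k)"
    and n: "2 \<le> n" "n \<le> N" and k: "1 \<le> k" "k \<le> n - 2"
  shows "Iint t \<alpha> n k - (1 + betak t \<alpha> (k + 1)) * zeta t \<alpha> n k
            < Iint t \<alpha> (n - 1) k - (1 + betak t \<alpha> (k + 1)) * zeta t \<alpha> (n - 1) k"
proof -
  define T1 where "T1 = tshift t (\<alpha>/2) n"
  define T2 where "T2 = tshift t (\<alpha>/2) (n-1)"
  define p where "p = t (k-1)"
  define q where "q = t k"
  define \<beta> where "\<beta> = betak t \<alpha> (k + 1)"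
  have pq: "p < q" unfolding p_def q_def using k n by (intro t_mono[where t=t and N=N, OF inc]) auto
  have ltn: "t (n-1) < t n" using n by (intro t_mono[where t=t and N=N, OF inc]) auto
  have ltn1: "t (n-1-1) < t (n-1)" using n k by (intro t_mono[where t=t and N=N, OF inc]) auto
  have "q \<le> t (n-1-1)" unfolding q_def using k n by (intro t_mono_le[where t=t and N=N, OF inc]) auto
  also have "t (n-1-1) < T2" unfolding T2_def using tshift_props[where m="n-1" and t=t, OF al ltn1] by simp
  finally have qT2: "q < T2" .
  have "T2 < t (n-1)" unfolding T2_def using tshift_props[where m="n-1" and t=t, OF al ltn1] by simp
  also have "t (n-1) < T1" unfolding T1_def using tshift_props[where m=n and t=t, OF al ltn] by simp
  finally have T21: "T2 < T1" .
  have qT1: "q < T1" using qT2 T21 by simp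
  have tk: "tau t k = q - p" by (simp add: tau_def p_def q_def)
  have tk1: "tau t (k+1) > 0" unfolding tau_def using k n by (simp add: t_mono[where t=t and N=N, OF inc])
  define K where "K = (\<lambda>s. (q - s) * ((q - p) - (1 + \<beta>) * (s - p)))"
  have cK: "continuous_on {p..q} K" unfolding K_def by (intro continuous_intros)
  have mono: "integral {p..q} (\<lambda>s. K s * (T1 - s) powr (-(\<alpha>+1))) < integral {p..q} (\<lambda>s. K s * (T2 - s) powr (-(\<alpha>+1)))"
  proof (rule mono_T[OF pq qT2 T21 cK])
    fix T assume T: "T \<in> {T2..T1}"
    have qT: "q < T" using T qT2 by simp
    have a: "T - q \<ge> (1 - \<alpha>/2) * tau t (k+1)"
      unfolding q_def using k n T by (intro key_a[where N=N and t=t and m="n-1", OF inc al]) (auto simp: T2_def)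
    have be: "\<beta> * ((1+\<alpha>)*(q-p) + (T-q)) \<le> 2*(T-q)"
      using beta_bound[OF al _ tk1 a] pq unfolding \<beta>_def tk by simp
    have "integral {p..q} (\<lambda>s. (q - s) * ((q - p) - (1 + \<beta>) * (s - p)) * (T - s) powr (-(\<alpha>+2))) > 0"
      by (rule coreI[where m=3, OF pq qT _ _ be closedB[OF pq qT]]) (use al in auto)
    then show "integral {p..q} (\<lambda>s. K s * (T - s) powr (-(\<alpha>+1)-1)) > 0"
      unfolding K_def by (simp add: algebra_simps)
  qed (use al in auto)
  have c: "\<alpha> / Gamma (1-\<alpha>) / (tau t k)^2 > 0" using al pq tk by simp
  have "Iint t \<alpha> n k - (1 + \<beta>) * zeta t \<alpha> n k < Iint t \<alpha> (n-1) k - (1 + \<beta>) * zeta t \<alpha> (n-1) k"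
    unfolding diff_rep(1)[OF pq[unfolded p_def q_def] qT1[unfolded q_def T1_def] al(2)]
      diff_rep(1)[OF pq[unfolded p_def q_def] qT2[unfolded q_def T2_def] al(2)]
    using mult_strict_left_mono[OF mono c] by (simp add: p_def q_def T1_def T2_def K_def)
  then show ?thesis by (simp add: \<beta>_def)
qed

lemma part_ii1:
  fixes \<alpha> :: real and t :: "nat \<Rightarrow> real"
  assumes al: "0 < \<alpha>" "\<alpha> < 1" and inc: "\<And>k. k < N \<Longrightarrow> t k < t (Suc k)"
    and n: "2 \<le> n" "n \<le> N" and k: "1 \<le> k" "k \<le> n - 1"
  shows "Jint t \<alpha> n k > 3 * zeta t \<alpha> n k"
proof -
  define T where "T = tshift t (\<alpha>/2) n"
  define p where "p = t (k-1)"
  define q where "q = t k"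
  have pq: "p < q" unfolding p_def q_def using k n by (intro t_mono[where t=t and N=N, OF inc]) auto
  have ltn: "t (n-1) < t n" using n by (intro t_mono[where t=t and N=N, OF inc]) auto
  have "q \<le> t (n-1)" unfolding q_def using k n by (intro t_mono_le[where t=t and N=N, OF inc]) auto
  also have "t (n-1) < T" unfolding T_def using tshift_props[where m=n and t=t, OF al ltn] by simp
  finally have qT: "q < T" .
  have tk: "tau t k = q - p" by (simp add: tau_def p_def q_def)
  have pos: "integral {p..q} (\<lambda>s. (s - p) * ((q - p) - 3*(q - s)) * (T - s) powr (-(\<alpha>+1))) > 0"
    by (rule coreJ[OF pq qT]) (use al in auto)
  have c: "\<alpha> / Gamma (1-\<alpha>) / (tau t k)^2 > 0" using al pq tk by simp
  have "Jint t \<alpha> n k - 3 * zeta t \<alpha> n k > 0"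
    unfolding diff_rep(2)[OF pq[unfolded p_def q_def] qT[unfolded q_def T_def] al(2)]
    using mult_pos_pos[OF c pos] by (simp add: p_def q_def T_def)
  then show ?thesis by simp
qed

lemma part_ii2:
  fixes \<alpha> :: real and t :: "nat \<Rightarrow> real"
  assumes al: "0 < \<alpha>" "\<alpha> < 1" and inc: "\<And>k. k < N \<Longrightarrow> t k < t (Suc k)"
    and n: "2 \<le> n" "n \<le> N" and k: "1 \<le> k" "k \<le> n - 2"
  shows "Jint t \<alpha> n k - 3 * zeta t \<alpha> n k < Jint t \<alpha> (n - 1) k - 3 * zeta t \<alpha> (n - 1) k"
proof -
  define T1 where "T1 = tshift t (\<alpha>/2) n"
  define T2 where "T2 = tshift t (\<alpha>/2) (n-1)"
  define p where "p = t (k-1)"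
  define q where "q = t k"
  have pq: "p < q" unfolding p_def q_def using k n by (intro t_mono[where t=t and N=N, OF inc]) auto
  have ltn: "t (n-1) < t n" using n by (intro t_mono[where t=t and N=N, OF inc]) auto
  have ltn1: "t (n-1-1) < t (n-1)" using n k by (intro t_mono[where t=t and N=N, OF inc]) auto
  have "q \<le> t (n-1-1)" unfolding q_def using k n by (intro t_mono_le[where t=t and N=N, OF inc]) auto
  also have "t (n-1-1) < T2" unfolding T2_def using tshift_props[where m="n-1" and t=t, OF al ltn1] by simp
  finally have qT2: "q < T2" .
  have "T2 < t (n-1)" unfolding T2_def using tshift_props[where m="n-1" and t=t, OF al ltn1] by simp
  also have "t (n-1) < T1" unfolding T1_def using tshift_props[where m=n and t=t, OF al ltn] by simp
  finally have T21: "T2 < T1" .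
  have qT1: "q < T1" using qT2 T21 by simp
  have tk: "tau t k = q - p" by (simp add: tau_def p_def q_def)
  define K where "K = (\<lambda>s. (s - p) * ((q - p) - 3 * (q - s)))"
  have cK: "continuous_on {p..q} K" unfolding K_def by (intro continuous_intros)
  have mono: "integral {p..q} (\<lambda>s. K s * (T1 - s) powr (-(\<alpha>+1))) < integral {p..q} (\<lambda>s. K s * (T2 - s) powr (-(\<alpha>+1)))"
  proof (rule mono_T[OF pq qT2 T21 cK])
    fix T assume T: "T \<in> {T2..T1}"
    have qT: "q < T" using T qT2 by simp
    have "integral {p..q} (\<lambda>s. (s - p) * ((q - p) - 3*(q - s)) * (T - s) powr (-(\<alpha>+2))) > 0"
      by (rule coreJ[OF pq qT]) (use al in auto)
    then show "integral {p..q} (\<lambda>s. K s * (T - s) powr (-(\<alpha>+1)-1)) > 0"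
      unfolding K_def by (simp add: algebra_simps)
  qed (use al in auto)
  have c: "\<alpha> / Gamma (1-\<alpha>) / (tau t k)^2 > 0" using al pq tk by simp
  have "Jint t \<alpha> n k - 3 * zeta t \<alpha> n k < Jint t \<alpha> (n-1) k - 3 * zeta t \<alpha> (n-1) k"
    unfolding diff_rep(2)[OF pq[unfolded p_def q_def] qT1[unfolded q_def T1_def] al(2)]
      diff_rep(2)[OF pq[unfolded p_def q_def] qT2[unfolded q_def T2_def] al(2)]
    using mult_strict_left_mono[OF mono c] by (simp add: p_def q_def T1_def T2_def K_def)
  then show ?thesis by simp
qed

lemma part_iii:
  fixes \<alpha> :: real and t :: "nat \<Rightarrow> real"
  assumes al: "0 < \<alpha>" "\<alpha> < 1" and inc: "\<And>k. k < N \<Longrightarrow> t k < t (Suc k)"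
    and n: "2 \<le> n" "n \<le> N"
  shows "ratio t n * zeta t \<alpha> n (n - 1) < \<alpha> / (3 * (2 - \<alpha>)) * varpi1 t \<alpha> n (t (n - 1))"
proof -
  define T where "T = tshift t (\<alpha>/2) n"
  define p where "p = t (n-1-1)"
  define q where "q = t (n-1)"
  define G where "G = Gamma (1 - \<alpha>)"
  define d where "d = T - q"
  have G0: "G > 0" using al by (simp add: G_def)
  have pq: "p < q" unfolding p_def q_def using n by (intro t_mono[where t=t and N=N, OF inc]) auto
  have ltn: "t (n-1) < t n" using n by (intro t_mono[where t=t and N=N, OF inc]) auto
  have qT: "q < T" unfolding T_def q_def using tshift_props[where m=n and t=t, OF al ltn] by simp
  have dd: "d = (1 - \<alpha>/2) * tau t n" unfolding d_def T_def q_def using tshift_props[where m=n and t=t, OF al ltn] by simp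
  have d0: "d > 0" using qT by (simp add: d_def)
  have tn: "tau t n > 0" using ltn by (simp add: tau_def)
  have tk: "tau t (n-1) = q - p" using n by (simp add: tau_def p_def q_def)
  have Z: "zeta t \<alpha> n (n-1) = \<alpha> / G / (q - p)^2 *
     integral {p..q} (\<lambda>s. (s - p) * (q - s) * (T - s) powr (-\<alpha>-1))"
    using zeta_rep[of t "n-1" \<alpha> n] pq qT al tk by (simp add: p_def q_def T_def G_def)
  have lt: "integral {p..q} (\<lambda>s. (s - p) * (q - s) * (T - s) powr (-\<alpha>-1))
      < integral {p..q} (\<lambda>s. (s - p) * (q - s) * d powr (-\<alpha>-1))"
  proof (rule integral_less_real)
    show "continuous_on {p..q} (\<lambda>s. (s - p) * (q - s) * (T - s) powr (-\<alpha>-1))"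
      using qT by (intro continuous_intros) auto
    show "continuous_on {p..q} (\<lambda>s. (s - p) * (q - s) * d powr (-\<alpha>-1))"
      by (intro continuous_intros)
    show "{p<..<q} \<noteq> {}" using pq by simp
    fix s assume s: "s \<in> {p<..<q}"
    have "(T - s) powr (-\<alpha>-1) < d powr (-\<alpha>-1)"
      using s d0 al unfolding d_def by (intro powr_less_mono2_neg) auto
    moreover have "(s - p) * (q - s) > 0" using s by simp
    ultimately show "(s - p) * (q - s) * (T - s) powr (-\<alpha>-1) < (s - p) * (q - s) * d powr (-\<alpha>-1)"
      by (rule mult_strict_left_mono)
  qed
  have eq: "integral {p..q} (\<lambda>s. (s - p) * (q - s) * d powr (-\<alpha>-1)) = (q - p)^3 / 6 * d powr (-\<alpha>-1)"
    using poly_int6[of p q] pq by simp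
  from lt have Y: "integral {p..q} (\<lambda>s. (s - p) * (q - s) * (T - s) powr (-\<alpha>-1)) < (q - p)^3 / 6 * d powr (-\<alpha>-1)"
    by (simp only: eq)
  have r: "ratio t n = tau t n / (q - p)" using tk by (simp add: ratio_def)
  have cpos: "tau t n / (q - p) * (\<alpha> / G / (q - p)^2) > 0" using tn pq al G0 by simp
  have "ratio t n * zeta t \<alpha> n (n - 1) < tau t n / (q - p) * (\<alpha> / G / (q - p)^2) * ((q - p)^3 / 6 * d powr (-\<alpha>-1))"
    unfolding r Z using mult_strict_left_mono[OF Y cpos] by (simp add: mult.assoc)
  also have "\<dots> = \<alpha> * tau t n * d powr (-\<alpha>-1) / (6 * G)"
  proof -
    have "\<And>u::real. u \<noteq> 0 \<Longrightarrow> tau t n / u * (\<alpha> / G / u^2) * (u^3 / 6 * d powr (-\<alpha>-1)) = \<alpha> * tau t n * d powr (-\<alpha>-1) / (6 * G)"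
      using G0 by (simp add: field_simps power3_eq_cube power2_eq_square)
    then show ?thesis using pq by simp
  qed
  also have "\<dots> = \<alpha> / (3 * (2 - \<alpha>)) * (d powr (-\<alpha>) / G)"
  proof -
    have e1: "d powr (-\<alpha>-1) = d powr (-\<alpha>) / d" using d0 by (simp add: powr_diff)
    have e2: "tau t n = 2 * d / (2 - \<alpha>)" using dd al by (simp add: field_simps)
    show ?thesis unfolding e1 e2 using d0 al G0 by (simp add: field_simps)
  qed
  also have "d powr (-\<alpha>) / G = varpi1 t \<alpha> n (t (n - 1))"
    by (simp add: varpi1_eq d_def T_def q_def G_def)
  finally show ?thesis .
qed


theorem lemma4p3:
  fixes \<alpha> T :: real and t :: "nat \<Rightarrow> real" and N n :: nat
  assumes "0 < \<alpha>" "\<alpha> < 1"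
    and "t 0 = 0" "t N = T" "\<And>k. k < N \<Longrightarrow> t k < t (Suc k)"
    and "2 \<le> n" "n \<le> N"
  shows "(\<forall>k. 1 \<le> k \<and> k \<le> n - 1 \<longrightarrow>
            Iint t \<alpha> n k > (1 + betak t \<alpha> (k + 1)) * zeta t \<alpha> n k)
       \<and> (\<forall>k. 1 \<le> k \<and> k \<le> n - 2 \<longrightarrow>
            Iint t \<alpha> n k - (1 + betak t \<alpha> (k + 1)) * zeta t \<alpha> n k
            < Iint t \<alpha> (n - 1) k - (1 + betak t \<alpha> (k + 1)) * zeta t \<alpha> (n - 1) k)
       \<and> (\<forall>k. 1 \<le> k \<and> k \<le> n - 1 \<longrightarrow> Jint t \<alpha> n k > 3 * zeta t \<alpha> n k)
       \<and> (\<forall>k. 1 \<le> k \<and> k \<le> n - 2 \<longrightarrow>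
            Jint t \<alpha> n k - 3 * zeta t \<alpha> n k
            < Jint t \<alpha> (n - 1) k - 3 * zeta t \<alpha> (n - 1) k)
       \<and> ratio t n * zeta t \<alpha> n (n - 1)
            < \<alpha> / (3 * (2 - \<alpha>)) * varpi1 t \<alpha> n (t (n - 1))"
  proof (intro conjI allI impI)
  fix k assume "1 \<le> k \<and> k \<le> n - 1"
  then show "Iint t \<alpha> n k > (1 + betak t \<alpha> (k + 1)) * zeta t \<alpha> n k"
    using part_i1[where N=N and t=t and n=n and \<alpha>=\<alpha>, OF assms(1,2,5,6,7)] by blast
next
  fix k assume "1 \<le> k \<and> k \<le> n - 2"
  then show "Iint t \<alpha> n k - (1 + betak t \<alpha> (k + 1)) * zeta t \<alpha> n k
            < Iint t \<alpha> (n - 1) k - (1 + betak t \<alpha> (k + 1)) * zeta t \<alpha> (n - 1) k"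
    using part_i2[where N=N and t=t and n=n and \<alpha>=\<alpha>, OF assms(1,2,5,6,7)] by blast
next
  fix k assume "1 \<le> k \<and> k \<le> n - 1"
  then show "Jint t \<alpha> n k > 3 * zeta t \<alpha> n k"
    using part_ii1[where N=N and t=t and n=n and \<alpha>=\<alpha>, OF assms(1,2,5,6,7)] by blast
next
  fix k assume "1 \<le> k \<and> k \<le> n - 2"
  then show "Jint t \<alpha> n k - 3 * zeta t \<alpha> n k
            < Jint t \<alpha> (n - 1) k - 3 * zeta t \<alpha> (n - 1) k"
    using part_ii2[where N=N and t=t and n=n and \<alpha>=\<alpha>, OF assms(1,2,5,6,7)] by blast
next
  show "ratio t n * zeta t \<alpha> n (n - 1)
            < \<alpha> / (3 * (2 - \<alpha>)) * varpi1 t \<alpha> n (t (n - 1))"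
    using part_iii[where N=N and t=t and n=n and \<alpha>=\<alpha>, OF assms(1,2,5,6,7)] .
qed

end
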